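(* Let $p\in(1/2,1)$, $V\in\{G,B\}$ and $r\ge2$ an integer, and let $p_f$ denote the value of $p_f$ at $\epsilon=\epsilon_r$. Then $$\lim_{\epsilon\to\epsilon_r^+}\mathbb{P}_{Y\text{-cas}}(\epsilon)=p_f^{r+1}\frac{1+(1-p_f)p_f^{r}}{1-r(1-p_f)p_f^{r}},\qquad \lim_{\epsilon\to\epsilon_r^-}\mathbb{P}_{Y\text{-cas}}(\epsilon)=\frac{p_f^{r}}{1-r(1-p_f)p_f^{r}},$$ so that as $\epsilon$ increases through $\epsilon_r$ the probability of a $Y$ cascade decreases, with relative drop $$\delta_r=\frac{\mathbb{P}_{Y\text{-cas}}(\epsilon_r^-)-\mathbb{P}_{Y\text{-cas}}(\epsilon_r^+)}{\mathbb{P}_{Y\text{-cas}}(\epsilon_r^-)}=(1-p_f)(1-p_f^{r+1}).$$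
   Context: Observational learning model: an item has true value $V\in\{G,B\}$; agents arrive sequentially, each receives a private binary signal equal to the "correct" signal with probability $p\in(1/2,1)$, and each agent is independently fake with probability $\epsilon\in[0,1)$ (a fake agent's recorded action is always $Y$ = buy). Define $a=p+(1-p)\epsilon$, $b=p(1-\epsilon)$, $\alpha=p/(1-p)$ and $\eta=\eta(\epsilon)=\log\big(a/(1-b)\big)/\log\alpha\in(0,1]$. Given $V$, let $p_f=a$ if $V=G$ and $p_f=1-b$ if $V=B$. Before any cascade, the agents' sufficient statistic $h$ evolves as the following random walk: $h_0=0$ and, independently at each step, $h$ increases by $\eta$ with probability $p_f$ (an observed $Y$) or decreases by $1$ with probability $1-p_f$ (an observed $N$); the walk is stopped the first time it leaves $[-1,1]$. Leaving above $1$ is a $Y$ cascade. $\mathbb{P}_{Y\text{-cas}}(\epsilon)$ denotes the probability (given $V$) that the walk leaves $[-1,1]$ above $1$. The thresholds are $\epsilon_r=\dfrac{\alpha-\alpha^{1/r}}{\alpha^{1/r+1}-1}$, $r=1,2,\ldots$. *)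

theory Defs
  imports Complex_Main
begin

datatype item_value = G | B

definition a_par :: "real \<Rightarrow> real \<Rightarrow> real" where
  "a_par p \<epsilon> = p + (1 - p) * \<epsilon>"

definition b_par :: "real \<Rightarrow> real \<Rightarrow> real" where
  "b_par p \<epsilon> = p * (1 - \<epsilon>)"

definition alpha_par :: "real \<Rightarrow> real" where
  "alpha_par p = p / (1 - p)"

definition eta_par :: "real \<Rightarrow> real \<Rightarrow> real" where
  "eta_par p \<epsilon> = ln (a_par p \<epsilon> / (1 - b_par p \<epsilon>)) / ln (alpha_par p)"

definition p_f :: "item_value \<Rightarrow> real \<Rightarrow> real \<Rightarrow> real" where
  "p_f V p \<epsilon> = (case V of G \<Rightarrow> a_par p \<epsilon> | B \<Rightarrow> 1 - b_par p \<epsilon>)"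

definition eps_thr :: "real \<Rightarrow> nat \<Rightarrow> real" where
  "eps_thr p r = (alpha_par p - alpha_par p powr (1 / real r))
                 / (alpha_par p powr (1 / real r + 1) - 1)"

text \<open>The random walk: a path is a list of observed actions (True = Y = step +eta,
  False = N = step -1). h after the path:\<close>
definition walk_pos :: "real \<Rightarrow> bool list \<Rightarrow> real" where
  "walk_pos \<eta> xs = (\<Sum>x\<leftarrow>xs. if x then \<eta> else -1)"

definition stays_inside :: "real \<Rightarrow> bool list \<Rightarrow> bool" where
  "stays_inside \<eta> xs = (\<forall>k\<le>length xs. walk_pos \<eta> (take k xs) \<in> {-1..1})"

definition path_prob :: "real \<Rightarrow> bool list \<Rightarrow> real" where
  "path_prob q xs = (\<Prod>x\<leftarrow>xs. if x then q else 1 - q)"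

text \<open>Probability that the walk (up-step eta with prob. q, down-step 1 otherwise),
  stopped at the first exit from [-1,1], exits above 1: sum over all stopping
  times n+1 of the probabilities of the paths that stay inside for n steps and
  exit above 1 at step n+1.\<close>
definition Y_exit_prob :: "real \<Rightarrow> real \<Rightarrow> real" where
  "Y_exit_prob \<eta> q =
     (\<Sum>n. \<Sum>xs | length xs = Suc n \<and> stays_inside \<eta> (butlast xs) \<and> walk_pos \<eta> xs > 1.
              path_prob q xs)"

definition P_Ycas :: "real \<Rightarrow> item_value \<Rightarrow> real \<Rightarrow> real" where
  "P_Ycas p V \<epsilon> = Y_exit_prob (eta_par p \<epsilon>) (p_f V p \<epsilon>)"

end

theory Submission
  imports Defs "HOL-Analysis.Analysis"
begin

fun gw :: "('s \<Rightarrow> bool) \<Rightarrow> ('s \<Rightarrow> bool) \<Rightarrow> ('s \<Rightarrow> 's) \<Rightarrow> ('s \<Rightarrow> 's) \<Rightarrow> real \<Rightarrow> 's \<Rightarrow> nat \<Rightarrow> real" where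
  "gw I A u d q s 0 = (if I s then q * (if A (u s) then 1 else 0) + (1 - q) * (if A (d s) then 1 else 0) else 0)"
| "gw I A u d q s (Suc n) = (if I s then q * gw I A u d q (u s) n + (1 - q) * gw I A u d q (d s) n else 0)"

lemma gw_notI: "\<not> I s \<Longrightarrow> gw I A u d q s n = 0"
  by (cases n) auto

lemma gw_sim:
  assumes "\<And>s. I' s = I (f s)" "\<And>s. A' s = A (f s)" "\<And>s. f (u' s) = u (f s)" "\<And>s. f (d' s) = d (f s)"
  shows "gw I' A' u' d' q s n = gw I A u d q (f s) n"
  by (induction n arbitrary: s) (simp_all add: assms)

lemma gw_nonneg: "0 \<le> q \<Longrightarrow> q \<le> 1 \<Longrightarrow> 0 \<le> gw I A u d q s n"
  by (induction n arbitrary: s) auto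

lemma gw_le1: "0 \<le> q \<Longrightarrow> q \<le> 1 \<Longrightarrow> gw I A u d q s n \<le> 1"
proof (induction n arbitrary: s)
  case 0
  have "q * (if A (u s) then 1 else 0) + (1 - q) * (if A (d s) then 1 else 0) \<le> q * 1 + (1-q) * 1"
    by (intro add_mono mult_left_mono) (use 0 in auto)
  then show ?case by auto
next
  case (Suc n)
  have "q * gw I A u d q (u s) n + (1 - q) * gw I A u d q (d s) n \<le> q * 1 + (1-q) * 1"
    by (intro add_mono mult_left_mono Suc) (use Suc in auto)
  then show ?case by auto
qed

lemma gw_step_bound:
  assumes q: "0 \<le> q" "q \<le> 1" and Bd: "0 \<le> Bd" and h: "\<And>s. gw I A u d q s m \<le> Bd"
  shows "gw I A u d q s (Suc m) \<le> Bd"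
proof -
  have "q * gw I A u d q (u s) m + (1 - q) * gw I A u d q (d s) m \<le> q * Bd + (1 - q) * Bd"
    by (intro add_mono mult_left_mono h) (use q in auto)
  then show ?thesis using Bd by (auto simp: algebra_simps)
qed

lemma c3_nonneg: "0 \<le> (q::real) \<Longrightarrow> q \<le> 1 \<Longrightarrow> 0 \<le> 1 - (1 - q)^3"
proof -
  assume "0 \<le> q" "q \<le> 1"
  then have "(1 - q)^3 \<le> 1" by (intro power_le_one) auto
  then show ?thesis by simp
qed

lemma gw_bound3:
  assumes q: "0 \<le> q" "q \<le> 1" and I3: "\<And>s. I s \<Longrightarrow> \<not> I (d (d (d s)))"
  shows "gw I A u d q s (3 * k + i) \<le> (1 - (1 - q)^3) ^ k"
proof (induction k arbitrary: s)
  case 0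
  then show ?case using gw_le1[OF q] by simp
next
  case (Suc k)
  define Bd where "Bd = (1 - (1 - q)^3) ^ k"
  define n where "n = 3 * k + i"
  have e: "3 * Suc k + i = Suc (Suc (Suc n))" by (simp add: n_def)
  let ?g = "gw I A u d q"
  show ?case
  proof (cases "I s")
    case False
    then show ?thesis using c3_nonneg[OF q] by (simp add: gw_notI)
  next
    case True
    have z: "?g (d (d (d s))) n = 0" using I3[OF True] by (simp add: gw_notI)
    have h2: "?g (d (d s)) (Suc n) \<le> q * Bd"
    proof -
      have "?g (d (d s)) (Suc n) \<le> q * ?g (u (d (d s))) n + (1 - q) * ?g (d (d (d s))) n"
        using q by (auto intro!: add_nonneg_nonneg mult_nonneg_nonneg gw_nonneg)
      also have "\<dots> \<le> q * Bd" using z Suc.IH[of "u (d (d s))"] q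
        by (simp add: Bd_def n_def mult_left_mono)
      finally show ?thesis .
    qed
    have h1: "?g (d s) (Suc (Suc n)) \<le> q * Bd + (1 - q) * (q * Bd)"
    proof -
      have "?g (d s) (Suc (Suc n)) \<le> q * ?g (u (d s)) (Suc n) + (1 - q) * ?g (d (d s)) (Suc n)"
        using q by (auto intro!: add_nonneg_nonneg mult_nonneg_nonneg gw_nonneg)
      also have "\<dots> \<le> q * Bd + (1 - q) * (q * Bd)"
      proof (intro add_mono mult_left_mono)
        have "?g (u (d s)) (Suc n) \<le> ?g (u (d s)) n \<or> True" by simp
        show "?g (u (d s)) (Suc n) \<le> Bd"
        proof -
          have "?g (u (d s)) (Suc n) \<le> q * ?g (u (u (d s))) n + (1 - q) * ?g (d (u (d s))) n"
            using q by (auto intro!: add_nonneg_nonneg mult_nonneg_nonneg gw_nonneg)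
          also have "\<dots> \<le> q * Bd + (1 - q) * Bd"
            by (intro add_mono mult_left_mono) (use q Suc.IH in \<open>auto simp: Bd_def n_def\<close>)
          finally show ?thesis by (simp add: algebra_simps)
        qed
      qed (use h2 q in auto)
      finally show ?thesis .
    qed
    have "?g s (Suc (Suc (Suc n))) = q * ?g (u s) (Suc (Suc n)) + (1 - q) * ?g (d s) (Suc (Suc n))"
      using True by simp
    also have "\<dots> \<le> q * Bd + (1 - q) * (q * Bd + (1 - q) * (q * Bd))"
    proof (intro add_mono mult_left_mono)
      show "?g (u s) (Suc (Suc n)) \<le> Bd"
      proof -
        have Bn: "0 \<le> Bd" using c3_nonneg[OF q] by (simp add: Bd_def)
        have l0: "\<And>s. ?g s n \<le> Bd" using Suc.IH by (simp add: Bd_def n_def)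
        have l1: "\<And>s. ?g s (Suc n) \<le> Bd" by (rule gw_step_bound[OF q Bn l0])
        show ?thesis by (rule gw_step_bound[OF q Bn l1])
      qed
    qed (use h1 q in auto)
    also have "\<dots> = (1 - (1 - q)^3) ^ Suc k" by (simp add: Bd_def power3_eq_cube algebra_simps)
    finally show ?thesis unfolding e .
  qed
qed

definition Mb :: "real \<Rightarrow> nat \<Rightarrow> real" where
  "Mb qm n = (1 - (1 - qm)^3) ^ (n div 3)"

lemma gw_bound_M:
  assumes q: "0 \<le> q" "q \<le> qm" "qm \<le> 1" and I3: "\<And>s. I s \<Longrightarrow> \<not> I (d (d (d s)))"
  shows "gw I A u d q s n \<le> Mb qm n"
proof -
  have "gw I A u d q s (3 * (n div 3) + n mod 3) \<le> (1 - (1 - q)^3) ^ (n div 3)"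
    by (rule gw_bound3) (use q I3 in auto)
  also have "\<dots> \<le> (1 - (1 - qm)^3) ^ (n div 3)"
  proof (rule power_mono)
    have "(1 - qm)^3 \<le> (1 - q)^3" by (rule power_mono) (use q in auto)
    then show "1 - (1 - q)^3 \<le> 1 - (1 - qm)^3" by simp
  qed (rule c3_nonneg, use q in auto)
  finally show ?thesis by (simp add: Mb_def)
qed

lemma summable_Mb:
  assumes "0 < qm" "qm < 1"
  shows "summable (Mb qm)"
proof -
  define c where "c = 1 - (1 - qm)^3"
  have "(1 - qm)^3 < 1" using assms by (simp add: power_less_one_iff)
  then have c0: "0 < c" unfolding c_def by simp
  have "0 < (1 - qm)^3" using assms by simp
  then have c1: "c < 1" unfolding c_def by simp
  define s where "s = c powr (1/3)"
  have s0: "0 < s" unfolding s_def using c0 by simp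
  have s1: "s < 1" unfolding s_def using c0 c1 powr_less_mono2[of "1/3" c 1] by simp
  have le: "Mb qm n \<le> (1/c) * s ^ n" for n
  proof -
    have "Mb qm n = c ^ (n div 3)" by (simp add: Mb_def c_def)
    also have "\<dots> = c powr real (n div 3)" using c0 by (simp add: powr_realpow)
    also have "\<dots> \<le> c powr (real n / 3 - 1)"
    proof (rule powr_mono')
      have "n \<le> 3 * (n div 3) + 2" by linarith
      then have "real n \<le> 3 * real (n div 3) + 2" by linarith
      then show "real n / 3 - 1 \<le> real (n div 3)" by simp
    qed (use c0 c1 in auto)
    also have "\<dots> = c powr (real n / 3) / c" using c0 by (simp add: powr_diff)
    also have "c powr (real n / 3) = s ^ n"
    proof -
      have "s ^ n = s powr real n" using s0 by (simp add: powr_realpow)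
      also have "\<dots> = c powr (real n / 3)" by (simp add: s_def powr_powr)
      finally show ?thesis by simp
    qed
    finally show ?thesis by simp
  qed
  have sm: "summable (\<lambda>n. (1/c) * s ^ n)" using s0 s1 by (intro summable_mult summable_geometric) auto
  have "0 \<le> Mb qm n" for n using c0 by (simp add: Mb_def c_def[symmetric])
  then have "norm (Mb qm n) \<le> (1/c) * s ^ n" for n using le[of n] by simp
  then show ?thesis by (rule summable_comparison_test'[OF sm])
qed

lemma gw_summable:
  assumes q: "0 \<le> q" "q \<le> qm" "qm < 1" "0 < qm" and I3: "\<And>s. I s \<Longrightarrow> \<not> I (d (d (d s)))"
  shows "summable (gw I A u d q s)"
proof (rule summable_comparison_test'[OF summable_Mb[OF q(4) q(3)]])
  fix n
  have "0 \<le> gw I A u d q s n" using q by (intro gw_nonneg) auto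
  moreover have "gw I A u d q s n \<le> Mb qm n" using q I3 by (intro gw_bound_M) auto
  ultimately show "norm (gw I A u d q s n) \<le> Mb qm n" by simp
qed

lemma gw_suminf_eq:
  assumes sm: "\<And>s. summable (gw I A u d q s)"
  shows "(\<Sum>n. gw I A u d q s n) = (if I s then q * (if A (u s) then 1 else 0) + (1 - q) * (if A (d s) then 1 else 0)
          + q * (\<Sum>n. gw I A u d q (u s) n) + (1 - q) * (\<Sum>n. gw I A u d q (d s) n) else 0)"
proof -
  have "(\<Sum>n. gw I A u d q s n) = gw I A u d q s 0 + (\<Sum>n. gw I A u d q s (Suc n))"
    using suminf_split_head[OF sm[of s]] by simp
  moreover have "(\<Sum>n. gw I A u d q s (Suc n)) = (if I s then q * (\<Sum>n. gw I A u d q (u s) n) + (1 - q) * (\<Sum>n. gw I A u d q (d s) n) else 0)"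
  proof (cases "I s")
    case True
    have "(\<Sum>n. gw I A u d q s (Suc n)) = (\<Sum>n. q * gw I A u d q (u s) n + (1 - q) * gw I A u d q (d s) n)"
      using True by simp
    also have "\<dots> = (\<Sum>n. q * gw I A u d q (u s) n) + (\<Sum>n. (1 - q) * gw I A u d q (d s) n)"
      by (intro suminf_add[symmetric] summable_mult sm)
    also have "\<dots> = q * (\<Sum>n. gw I A u d q (u s) n) + (1 - q) * (\<Sum>n. gw I A u d q (d s) n)"
      by (simp add: suminf_mult sm)
    finally show ?thesis using True by simp
  qed simp
  ultimately show ?thesis by simp
qed

definition ins :: "real \<Rightarrow> real \<Rightarrow> bool list \<Rightarrow> bool" where
  "ins \<eta> x xs = (\<forall>k\<le>length xs. x + walk_pos \<eta> (take k xs) \<in> {-1..1})"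

definition Gr :: "real \<Rightarrow> real \<Rightarrow> real \<Rightarrow> nat \<Rightarrow> real" where
  "Gr \<eta> q x n = gw (\<lambda>x. x \<in> {-1..1}) (\<lambda>x. 1 < x) (\<lambda>x. x + \<eta>) (\<lambda>x. x - 1) q x n"

lemma walk_pos_Nil[simp]: "walk_pos \<eta> [] = 0" by (simp add: walk_pos_def)
lemma walk_pos_Cons[simp]: "walk_pos \<eta> (b # ys) = (if b then \<eta> else -1) + walk_pos \<eta> ys"
  by (simp add: walk_pos_def)
lemma path_prob_Cons[simp]: "path_prob q (b # ys) = (if b then q else 1 - q) * path_prob q ys"
  by (simp add: path_prob_def)

lemma ins_Nil[simp]: "ins \<eta> x [] = (x \<in> {-1..1})" by (simp add: ins_def)

lemma all_le_Suc: "(\<forall>k\<le>Suc m. P k) = (P 0 \<and> (\<forall>k\<le>m. P (Suc k)))"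
  by (metis Suc_le_mono le0 not0_implies_Suc)

lemma ins_Cons[simp]: "ins \<eta> x (b # ys) = (x \<in> {-1..1} \<and> ins \<eta> (x + (if b then \<eta> else -1)) ys)"
  unfolding ins_def by (simp only: length_Cons all_le_Suc) (simp add: add.assoc)

lemma finite_bl: "finite {ys :: bool list. length ys = n \<and> Q ys}"
  by (rule rev_finite_subset[OF finite_lists_length_eq[of "UNIV :: bool set" n]]) auto

lemma set_Suc: "{xs :: bool list. length xs = Suc n \<and> P xs} =
   Cons True ` {ys. length ys = n \<and> P (True # ys)} \<union> Cons False ` {ys. length ys = n \<and> P (False # ys)}"
proof (rule set_eqI, rule iffI)
  fix xs assume "xs \<in> {xs :: bool list. length xs = Suc n \<and> P xs}"
  then obtain b ys where "xs = b # ys" "length ys = n" "P xs" by (auto simp: length_Suc_conv)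
  then show "xs \<in> Cons True ` {ys. length ys = n \<and> P (True # ys)} \<union> Cons False ` {ys. length ys = n \<and> P (False # ys)}"
    by (cases b) auto
qed auto

lemma sum_Suc:
  "(\<Sum>xs | length xs = Suc n \<and> P xs. f xs) =
   (\<Sum>ys | length ys = n \<and> P (True # ys). f (True # ys)) + (\<Sum>ys | length ys = n \<and> P (False # ys). f (False # ys))"
proof -
  have "(\<Sum>xs | length xs = Suc n \<and> P xs. f xs) =
     sum f (Cons True ` {ys. length ys = n \<and> P (True # ys)}) + sum f (Cons False ` {ys. length ys = n \<and> P (False # ys)})"
    unfolding set_Suc by (rule sum.union_disjoint) (auto intro: finite_bl)
  also have "\<dots> = (\<Sum>ys | length ys = n \<and> P (True # ys). f (True # ys)) + (\<Sum>ys | length ys = n \<and> P (False # ys). f (False # ys))"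
    by (subst (1 2) sum.reindex) (auto simp: inj_on_def)
  finally show ?thesis .
qed

lemma path_sum:
  "(\<Sum>xs | length xs = Suc n \<and> ins \<eta> x (butlast xs) \<and> 1 < x + walk_pos \<eta> xs. path_prob q xs) = Gr \<eta> q x n"
proof (induction n arbitrary: x)
  case 0
  have e: "{ys :: bool list. length ys = 0 \<and> Q ys} = (if Q [] then {[]} else {})" for Q by auto
  show ?case unfolding sum_Suc e by (simp add: Gr_def path_prob_def)
next
  case (Suc n)
  have e: "{ys. length ys = Suc n \<and> ins \<eta> x (butlast (b # ys)) \<and> 1 < x + walk_pos \<eta> (b # ys)} =
     (if x \<in> {-1..1} then {ys. length ys = Suc n \<and> ins \<eta> (x + (if b then \<eta> else -1)) (butlast ys)
       \<and> 1 < (x + (if b then \<eta> else -1)) + walk_pos \<eta> ys} else {})" for b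
    by (auto simp: add.assoc split: if_splits)
  have t: "(\<Sum>ys | length ys = Suc n \<and> ins \<eta> x (butlast (b # ys)) \<and> 1 < x + walk_pos \<eta> (b # ys). path_prob q (b # ys))
     = (if x \<in> {-1..1} then (if b then q else 1 - q) * Gr \<eta> q (x + (if b then \<eta> else -1)) n else 0)" for b
  proof (cases "x \<in> {-1..1}")
    case True
    have "(\<Sum>ys | length ys = Suc n \<and> ins \<eta> x (butlast (b # ys)) \<and> 1 < x + walk_pos \<eta> (b # ys). path_prob q (b # ys))
      = (\<Sum>ys | length ys = Suc n \<and> ins \<eta> (x + (if b then \<eta> else -1)) (butlast ys)
       \<and> 1 < (x + (if b then \<eta> else -1)) + walk_pos \<eta> ys. (if b then q else 1 - q) * path_prob q ys)"
      unfolding e by (simp only: if_P[OF True] path_prob_Cons)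
    also have "\<dots> = (if b then q else 1 - q) * Gr \<eta> q (x + (if b then \<eta> else -1)) n"
      by (simp only: sum_distrib_left[symmetric] Suc.IH)
    finally show ?thesis by (simp only: if_P[OF True])
  next
    case False
    show ?thesis unfolding e by (simp only: if_not_P[OF False] sum.empty)
  qed
  show ?case
    apply (subst sum_Suc)
    apply (simp only: t)
    apply (simp add: Gr_def)
    done
qed

lemma Y_exit_Gr: "Y_exit_prob \<eta> q = (\<Sum>n. Gr \<eta> q 0 n)"
proof -
  have i: "ins \<eta> 0 xs = stays_inside \<eta> xs" for xs by (simp add: ins_def stays_inside_def)
  have "(\<Sum>xs | length xs = Suc n \<and> stays_inside \<eta> (butlast xs) \<and> 1 < walk_pos \<eta> xs. path_prob q xs) = Gr \<eta> q 0 n" for n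
    using path_sum[where x=0 and n=n and \<eta>=\<eta> and q=q] by (simp add: i)
  then show ?thesis unfolding Y_exit_prob_def by simp
qed

lemma gw_tendsto:
  fixes I A :: "'e \<Rightarrow> 's \<Rightarrow> bool" and qe :: "'e \<Rightarrow> real"
  assumes q: "(qe \<longlongrightarrow> q0) F"
    and Pud: "\<And>s. P s \<Longrightarrow> P (u s) \<and> P (d s)"
    and ev: "\<And>s. P s \<Longrightarrow> eventually (\<lambda>e. (I e s \<longleftrightarrow> I0 s) \<and> (A e s \<longleftrightarrow> A0 s)) F"
  shows "P s \<Longrightarrow> ((\<lambda>e. gw (I e) (A e) u d (qe e) s n) \<longlongrightarrow> gw I0 A0 u d q0 s n) F"
proof (induction n arbitrary: s)
  case 0
  have Pu: "P (u s)" and Pd: "P (d s)" using Pud[OF 0] by auto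
  have e1: "eventually (\<lambda>e. gw (I e) (A e) u d (qe e) s 0 = (if I0 s then qe e * (if A0 (u s) then 1 else 0) + (1 - qe e) * (if A0 (d s) then 1 else 0) else 0)) F"
    using ev[OF 0] ev[OF Pu] ev[OF Pd] by eventually_elim auto
  have l1: "((\<lambda>e. if I0 s then qe e * (if A0 (u s) then 1 else 0) + (1 - qe e) * (if A0 (d s) then 1 else 0) else 0) \<longlongrightarrow> gw I0 A0 u d q0 s 0) F"
    by (cases "I0 s") (auto intro!: tendsto_intros q)
  show ?case by (subst tendsto_cong[OF e1]) (rule l1)
next
  case (Suc n)
  have Pu: "P (u s)" and Pd: "P (d s)" using Pud[OF Suc.prems] by auto
  have e1: "eventually (\<lambda>e. gw (I e) (A e) u d (qe e) s (Suc n) = (if I0 s then qe e * gw (I e) (A e) u d (qe e) (u s) n + (1 - qe e) * gw (I e) (A e) u d (qe e) (d s) n else 0)) F"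
    using ev[OF Suc.prems] by eventually_elim auto
  have l1: "((\<lambda>e. if I0 s then qe e * gw (I e) (A e) u d (qe e) (u s) n + (1 - qe e) * gw (I e) (A e) u d (qe e) (d s) n else 0) \<longlongrightarrow> gw I0 A0 u d q0 s (Suc n)) F"
    by (cases "I0 s") (auto intro!: tendsto_intros q Suc.IH Pu Pd)
  show ?case by (subst tendsto_cong[OF e1]) (rule l1)
qed

lemma gw_suminf_tendsto:
  fixes I A :: "'e \<Rightarrow> 's \<Rightarrow> bool" and qe :: "'e \<Rightarrow> real"
  assumes lim: "\<And>n. ((\<lambda>e. gw (I e) (A e) u d (qe e) s n) \<longlongrightarrow> b n) F"
    and ev: "eventually (\<lambda>e. 0 \<le> qe e \<and> qe e \<le> qm \<and> (\<forall>s. I e s \<longrightarrow> \<not> I e (d (d (d s))))) F"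
    and qm: "0 < qm" "qm < 1" and F: "F \<noteq> bot"
  shows "((\<lambda>e. \<Sum>n. gw (I e) (A e) u d (qe e) s n) \<longlongrightarrow> (\<Sum>n. b n)) F"
proof -
  have "eventually (\<lambda>(n, e). norm (gw (I e) (A e) u d (qe e) s n) \<le> Mb qm n) (at_top \<times>\<^sub>F F)"
    unfolding eventually_prod_filter
  proof (intro exI conjI allI impI)
    show "eventually (\<lambda>_. True) at_top" by simp
    show "eventually (\<lambda>e. 0 \<le> qe e \<and> qe e \<le> qm \<and> (\<forall>s. I e s \<longrightarrow> \<not> I e (d (d (d s))))) F" by (rule ev)
  next
    fix n e assume "0 \<le> qe e \<and> qe e \<le> qm \<and> (\<forall>s. I e s \<longrightarrow> \<not> I e (d (d (d s))))"
    then have h: "0 \<le> qe e" "qe e \<le> qm" "\<And>s. I e s \<Longrightarrow> \<not> I e (d (d (d s)))" by auto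
    have "0 \<le> gw (I e) (A e) u d (qe e) s n" using h qm by (intro gw_nonneg) auto
    moreover have "gw (I e) (A e) u d (qe e) s n \<le> Mb qm n" using h qm by (intro gw_bound_M) auto
    ultimately show "(\<lambda>(n, e). norm (gw (I e) (A e) u d (qe e) s n) \<le> Mb qm n) (n, e)" by simp
  qed
  from tannerys_theorem[OF lim this summable_Mb[OF qm] F] show ?thesis by blast
qed

lemma chainR:
  fixes v :: "int \<Rightarrow> real" and q :: real and r :: nat
  assumes r: "1 \<le> r"
    and low: "\<And>j. - int r < j \<Longrightarrow> j \<le> 0 \<Longrightarrow> v j = q * v (j + 1)"
    and mid: "\<And>j. 1 \<le> j \<Longrightarrow> j < int r \<Longrightarrow> v j = q * v (j + 1) + (1 - q) * v (j - int r)"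
    and top: "v (int r) = q + (1 - q) * v 0"
  shows "v 1 = q ^ r + real r * (1 - q) * q ^ r * v 1" "v (1 - int r) = q ^ r * v 1"
proof -
  have a: "i < r \<Longrightarrow> v (- int i) = q ^ (i + 1) * v 1" for i
  proof (induction i)
    case 0
    then show ?case using low[of 0] by simp
  next
    case (Suc i)
    have "v (- int (Suc i)) = q * v (- int (Suc i) + 1)" using Suc.prems by (intro low) auto
    also have "- int (Suc i) + 1 = - int i" by simp
    finally show ?case using Suc by simp
  qed
  have b: "i < r \<Longrightarrow> v (int r - int i) = q ^ (i + 1) + real (i + 1) * (1 - q) * q ^ (i + 1) * v 1" for i
  proof (induction i)
    case 0
    then show ?case using top a[of 0] by (simp add: algebra_simps)
  next
    case (Suc i)
    have "v (int r - int (Suc i)) = q * v (int r - int (Suc i) + 1) + (1 - q) * v (int r - int (Suc i) - int r)"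
      using Suc.prems by (intro mid) auto
    also have "int r - int (Suc i) + 1 = int r - int i" by simp
    also have "int r - int (Suc i) - int r = - int (Suc i)" by simp
    also have "v (- int (Suc i)) = q ^ (Suc i + 1) * v 1" using a Suc.prems by blast
    finally show ?case using Suc by (simp add: algebra_simps)
  qed
  have "v (int r - int (r - 1)) = q ^ (r - 1 + 1) + real (r - 1 + 1) * (1 - q) * q ^ (r - 1 + 1) * v 1"
    using r by (intro b) auto
  moreover have "int r - int (r - 1) = 1" "r - 1 + 1 = r" using r by auto
  ultimately show "v 1 = q ^ r + real r * (1 - q) * q ^ r * v 1" by simp
  have "v (- int (r - 1)) = q ^ (r - 1 + 1) * v 1" using r by (intro a) auto
  moreover have "- int (r - 1) = 1 - int r" using r by auto
  ultimately show "v (1 - int r) = q ^ r * v 1" using \<open>r - 1 + 1 = r\<close> by simp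
qed

lemma chainL:
  fixes v :: "int \<Rightarrow> real" and q :: real and r :: nat
  assumes r: "2 \<le> r"
    and low: "\<And>j. - int r \<le> j \<Longrightarrow> j \<le> -1 \<Longrightarrow> v j = q * v (j + 1)"
    and mid: "\<And>j. 0 \<le> j \<Longrightarrow> j < int r - 1 \<Longrightarrow> v j = q * v (j + 1) + (1 - q) * v (j - int r)"
    and top: "v (int r - 1) = q + (1 - q) * v (-1)"
  shows "v 0 = q ^ r + real r * (1 - q) * q ^ r * v 0" "q * v 1 + (1 - q) * (q * v (1 - int r)) = v 0"
proof -
  have a: "i \<le> r \<Longrightarrow> v (- int i) = q ^ i * v 0" for i
  proof (induction i)
    case 0
    then show ?case by simp
  next
    case (Suc i)
    have "v (- int (Suc i)) = q * v (- int (Suc i) + 1)" using Suc.prems by (intro low) auto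
    also have "- int (Suc i) + 1 = - int i" by simp
    finally show ?case using Suc by simp
  qed
  have b: "i < r \<Longrightarrow> v (int r - 1 - int i) = q ^ (i + 1) + real (i + 1) * (1 - q) * q ^ (i + 1) * v 0" for i
  proof (induction i)
    case 0
    then show ?case using top a[of 1] r by (simp add: algebra_simps)
  next
    case (Suc i)
    have "v (int r - 1 - int (Suc i)) = q * v (int r - 1 - int (Suc i) + 1) + (1 - q) * v (int r - 1 - int (Suc i) - int r)"
      using Suc.prems by (intro mid) auto
    also have "int r - 1 - int (Suc i) + 1 = int r - 1 - int i" by simp
    also have "int r - 1 - int (Suc i) - int r = - int (Suc (Suc i))" by simp
    also have "v (- int (Suc (Suc i))) = q ^ (Suc (Suc i)) * v 0" using Suc.prems by (intro a) simp
    also have "v (int r - 1 - int i) = q ^ (i + 1) + real (i + 1) * (1 - q) * q ^ (i + 1) * v 0"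
      using Suc by simp
    finally show ?case by (simp add: algebra_simps)
  qed
  have "v (int r - 1 - int (r - 1)) = q ^ (r - 1 + 1) + real (r - 1 + 1) * (1 - q) * q ^ (r - 1 + 1) * v 0"
    using r by (intro b) auto
  moreover have "int r - 1 - int (r - 1) = 0" "r - 1 + 1 = r" using r by auto
  ultimately show "v 0 = q ^ r + real r * (1 - q) * q ^ r * v 0" by simp
  have "v 0 = q * v (0 + 1) + (1 - q) * v (0 - int r)" using r by (intro mid) auto
  moreover have "v (- int r) = q * v (- int r + 1)" using r by (intro low) auto
  ultimately show "q * v 1 + (1 - q) * (q * v (1 - int r)) = v 0" by (simp add: add.commute)
qed

lemma alpha_gt1: "1/2 < p \<Longrightarrow> p < 1 \<Longrightarrow> 1 < alpha_par p"
  by (simp add: alpha_par_def field_simps)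

lemma eps_thr_facts:
  fixes p :: real and r :: nat
  assumes p: "1/2 < p" "p < 1" and r: "2 \<le> r"
  shows "0 < eps_thr p r" "eps_thr p r < 1"
    "a_par p (eps_thr p r) / (1 - b_par p (eps_thr p r)) = alpha_par p powr (1 / real r)"
proof -
  define al where "al = alpha_par p"
  define s where "s = al powr (1 / real r)"
  have al1: "1 < al" using alpha_gt1[OF p] by (simp add: al_def)
  have s1: "1 < s" using al1 r by (simp add: s_def)
  have "al powr (1 / real r) < al powr 1" using r al1 by (intro powr_less_mono) auto
  then have sal: "s < al" using al1 by (simp add: s_def)
  have pw: "al powr (1 / real r + 1) = s * al" using al1 by (simp add: s_def powr_add)
  have e: "eps_thr p r = (al - s) / (s * al - 1)" by (simp add: eps_thr_def al_def[symmetric] s_def[symmetric] pw)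
  have d: "0 < s * al - 1" using s1 al1 by (smt (verit) mult_less_cancel_left1)
  show "0 < eps_thr p r" unfolding e using d sal by simp
  have "al - s < s * al - 1"
  proof -
    have "(al + 1) * 1 < (al + 1) * s" using s1 al1 by (intro mult_strict_left_mono) auto
    then show ?thesis by (simp add: algebra_simps)
  qed
  then show "eps_thr p r < 1" unfolding e using d by simp
  have alp: "al = p / (1 - p)" by (simp add: al_def alpha_par_def)
  have p1: "0 < 1 - p" using p by simp
  have den: "0 < 1 - b_par p (eps_thr p r)"
  proof -
    have "p * (1 - eps_thr p r) \<le> p * 1" using \<open>0 < eps_thr p r\<close> p by (intro mult_left_mono) auto
    then show ?thesis using p unfolding b_par_def by linarith
  qed
  have "a_par p (eps_thr p r) = s * (1 - b_par p (eps_thr p r))"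
  proof -
    have hp: "p = al * (1 - p)" using p1 by (simp add: alp)
    define e0 where "e0 = eps_thr p r"
    have "a_par p e0 - s * (1 - b_par p e0) = (p - s * (1 - p)) + e0 * ((1 - p) - s * p)"
      by (simp add: a_par_def b_par_def algebra_simps)
    also have "p - s * (1 - p) = (1 - p) * (al - s)" by (subst (1) hp) (simp add: algebra_simps)
    also have "(1 - p) - s * p = - ((1 - p) * (s * al - 1))" by (subst (2) hp) (simp add: algebra_simps)
    also have "e0 * (- ((1 - p) * (s * al - 1))) = - ((1 - p) * (al - s))"
      unfolding e0_def e using d by (simp add: field_simps)
    finally show ?thesis unfolding e0_def by simp
  qed
  then show "a_par p (eps_thr p r) / (1 - b_par p (eps_thr p r)) = alpha_par p powr (1 / real r)"
    using den by (simp add: s_def al_def)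
qed

lemma eta_e0:
  assumes p: "1/2 < p" "p < 1" and r: "2 \<le> r"
  shows "eta_par p (eps_thr p r) = 1 / real r"
proof -
  have al1: "1 < alpha_par p" using alpha_gt1[OF p] .
  show ?thesis unfolding eta_par_def eps_thr_facts(3)[OF p r] using al1 by simp
qed

lemma ratio_pos:
  assumes p: "1/2 < p" "p < 1" and e: "0 \<le> e"
  shows "0 < a_par p e" "0 < 1 - b_par p e"
proof -
  have "0 \<le> (1 - p) * e" "0 \<le> p * e" using p e by auto
  then show "0 < a_par p e" "0 < 1 - b_par p e" using p by (simp_all add: a_par_def b_par_def algebra_simps)
qed

lemma eta_mono:
  assumes p: "1/2 < p" "p < 1" and e: "0 \<le> e" "e < e'"
  shows "eta_par p e' < eta_par p e"
proof -
  have al1: "1 < alpha_par p" using alpha_gt1[OF p] .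
  have e': "0 \<le> e'" using e by simp
  note pos = ratio_pos[OF p e(1)] ratio_pos[OF p e']
  have key: "a_par p e' * (1 - b_par p e) < a_par p e * (1 - b_par p e')"
  proof -
    have "a_par p e * (1 - b_par p e') - a_par p e' * (1 - b_par p e) = (e' - e) * (2 * p - 1)"
      by (simp add: a_par_def b_par_def algebra_simps)
    moreover have "0 < (e' - e) * (2 * p - 1)" using e p by simp
    ultimately show ?thesis by simp
  qed
  have "a_par p e' / (1 - b_par p e') < a_par p e / (1 - b_par p e)"
    using key pos by (simp add: divide_simps)
  then have "ln (a_par p e' / (1 - b_par p e')) < ln (a_par p e / (1 - b_par p e))"
    using pos by simp
  then show ?thesis unfolding eta_par_def using al1 by (simp add: divide_strict_right_mono)
qed

lemma eta_cont:
  assumes p: "1/2 < p" "p < 1" and e: "0 \<le> e"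
  shows "isCont (eta_par p) e"
proof -
  note pos = ratio_pos[OF p e]
  have "0 < ln (alpha_par p)" using alpha_gt1[OF p] by simp
  have "isCont (\<lambda>e. ln (a_par p e / (1 - b_par p e)) / ln (alpha_par p)) e"
    using pos \<open>0 < ln (alpha_par p)\<close> unfolding a_par_def b_par_def
    by (intro continuous_intros) auto
  then show ?thesis unfolding eta_par_def[abs_def] by simp
qed

lemma qf_cont: "isCont (p_f V p) e"
  unfolding p_f_def[abs_def] a_par_def b_par_def by (cases V) (auto intro!: continuous_intros)

lemma qf_range:
  assumes p: "1/2 < p" "p < 1" and e: "0 < e" "e < 1"
  shows "0 < p_f V p e" "p_f V p e < 1"
proof -
  have "0 < (1 - p) * (1 - e)" "0 < p * (1 - e)" "0 < (1-p) * e" "0 < p * e" using p e by auto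
  then show "0 < p_f V p e" "p_f V p e < 1" unfolding p_f_def a_par_def b_par_def
    by (cases V; simp add: algebra_simps)+
qed

definition posn :: "real \<Rightarrow> nat \<Rightarrow> int \<Rightarrow> nat \<Rightarrow> real" where
  "posn et r j k = of_int j / real r + real k * (et - 1 / real r)"

definition upS :: "int \<times> nat \<Rightarrow> int \<times> nat" where "upS = (\<lambda>(j, k). (j + 1, Suc k))"
definition dnS :: "nat \<Rightarrow> int \<times> nat \<Rightarrow> int \<times> nat" where "dnS r = (\<lambda>(j, k). (j - int r, k))"

definition IS :: "real \<Rightarrow> nat \<Rightarrow> int \<times> nat \<Rightarrow> bool" where
  "IS et r = (\<lambda>(j, k). posn et r j k \<in> {-1..1})"
definition AS :: "real \<Rightarrow> nat \<Rightarrow> int \<times> nat \<Rightarrow> bool" where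
  "AS et r = (\<lambda>(j, k). 1 < posn et r j k)"

lemma posn_up: "r > 0 \<Longrightarrow> posn et r (j + 1) (Suc k) = posn et r j k + et"
  by (simp add: posn_def field_simps)
lemma posn_dn: "r > 0 \<Longrightarrow> posn et r (j - int r) k = posn et r j k - 1"
  by (simp add: posn_def field_simps)

lemma posn_dn3: "r > 0 \<Longrightarrow> posn et r (j - 3 * int r) k = posn et r j k - 3"
  by (simp add: posn_def field_simps)

lemma Gr_gwS: "r > 0 \<Longrightarrow> Gr et q (posn et r j k) n = gw (IS et r) (AS et r) upS (dnS r) q (j, k) n"
proof -
  assume r: "r > 0"
  have "gw (IS et r) (AS et r) upS (dnS r) q (j, k) n = gw (\<lambda>x. x \<in> {-1..1}) (\<lambda>x. 1 < x) (\<lambda>x. x + et) (\<lambda>x. x - 1) q ((\<lambda>(j, k). posn et r j k) (j, k)) n"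
    by (rule gw_sim) (auto simp: IS_def AS_def upS_def dnS_def posn_up posn_dn r)
  then show ?thesis by (simp add: Gr_def)
qed

lemma I3S: "r > 0 \<Longrightarrow> IS et r s \<Longrightarrow> \<not> IS et r (dnS r (dnS r (dnS r s)))"
  by (cases s) (auto simp: IS_def dnS_def posn_dn3)

lemma gwS_fst:
  "gw (\<lambda>(j, k). I0 j) (\<lambda>(j, k). A0 j) upS (dnS r) q (j, k) n = gw I0 A0 (\<lambda>j. j + 1) (\<lambda>j. j - int r) q j n"
  using gw_sim[of "\<lambda>(j, k). I0 j" I0 fst "\<lambda>(j, k). A0 j" A0 upS "\<lambda>j. j + 1" "dnS r" "\<lambda>j. j - int r" q "(j, k)" n]
  by (auto simp: upS_def dnS_def split: prod.splits)

lemma side: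
  fixes p :: real and r :: nat and V :: item_value and F :: "real filter"
    and I0 A0 :: "int \<Rightarrow> bool"
  assumes p: "1/2 < p" "p < 1" and r: "2 \<le> r"
    and F: "F \<noteq> bot"
    and ev: "eventually (\<lambda>e. 0 < e \<and> e < 1 \<and> 0 < eta_par p e \<and> eta_par p e < 1) F"
    and qlim: "(p_f V p \<longlongrightarrow> q0) F" and q0: "0 < q0" "q0 < 1"
    and H4: "\<And>j k. 1 \<le> k \<Longrightarrow> eventually (\<lambda>e. (IS (eta_par p e) r (j, k) \<longleftrightarrow> I0 j) \<and> (AS (eta_par p e) r (j, k) \<longleftrightarrow> A0 j)) F"
    and H5: "\<And>j. I0 j \<Longrightarrow> \<not> I0 (j - int r - int r - int r)"
  defines "v \<equiv> \<lambda>j. \<Sum>n. gw I0 A0 (\<lambda>j. j + 1) (\<lambda>j. j - int r) q0 j n"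
  shows "(P_Ycas p V \<longlongrightarrow> q0 * v 1 + (1 - q0) * q0 * v (1 - int r)) F"
proof -
  define qm where "qm = (1 + q0) / 2"
  have qm: "0 < qm" "qm < 1" "q0 < qm" using q0 by (auto simp: qm_def)
  have r0: "r > 0" using r by simp
  define W where "W = (\<lambda>e s. \<Sum>n. gw (IS (eta_par p e) r) (AS (eta_par p e) r) upS (dnS r) (p_f V p e) s n)"
  have evq: "eventually (\<lambda>e. p_f V p e < qm) F" using qlim qm(3) by (rule order_tendstoD)
  have evall: "eventually (\<lambda>e. 0 < e \<and> e < 1 \<and> 0 < eta_par p e \<and> eta_par p e < 1 \<and> p_f V p e < qm) F"
    using ev evq by eventually_elim auto
  have evb: "eventually (\<lambda>e. 0 \<le> p_f V p e \<and> p_f V p e \<le> qm \<and> (\<forall>s. IS (eta_par p e) r s \<longrightarrow> \<not> IS (eta_par p e) r (dnS r (dnS r (dnS r s))))) F"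
    using evall by eventually_elim (use qf_range[OF p] I3S[OF r0] in \<open>auto simp: less_imp_le\<close>)
  have dec: "eventually (\<lambda>e. P_Ycas p V e = p_f V p e * W e (1, 1) + (1 - p_f V p e) * p_f V p e * W e (1 - int r, 1)) F"
    using evall
  proof eventually_elim
    case (elim e)
    define et where "et = eta_par p e"
    define q where "q = p_f V p e"
    have q: "0 \<le> q" "q \<le> qm" using elim qf_range[OF p, of e V] by (auto simp: q_def)
    have et: "0 < et" "et < 1" using elim by (auto simp: et_def)
    have sm: "summable (gw (IS et r) (AS et r) upS (dnS r) q s)" for s
      using q qm by (intro gw_summable[where qm=qm] I3S[OF r0]) auto
    note eq = gw_suminf_eq[OF sm]
    have p00: "posn et r 0 0 = 0" by (simp add: posn_def)
    have Y: "P_Ycas p V e = (\<Sum>n. gw (IS et r) (AS et r) upS (dnS r) q (0, 0) n)"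
    proof -
      have "Gr et q 0 = (\<lambda>n. gw (IS et r) (AS et r) upS (dnS r) q (0, 0) n)"
        using Gr_gwS[OF r0, of et q 0 0] p00 by (simp add: fun_eq_iff)
      then show ?thesis by (simp add: P_Ycas_def Y_exit_Gr et_def q_def)
    qed
    have pa: "posn et r 1 1 = et" "posn et r (0 - int r) 0 = -1" "posn et r (0 - int r + 1) (Suc 0) = et - 1"
      "posn et r (0 - int r - int r) 0 = -2"
      using r0 by (simp_all add: posn_def field_simps)
    have W2: "(\<Sum>n. gw (IS et r) (AS et r) upS (dnS r) q (0 - int r - int r, 0) n) = 0"
      using pa(4) by (simp add: gw_notI IS_def)
    have "(\<Sum>n. gw (IS et r) (AS et r) upS (dnS r) q (0, 0) n) =
       q * (\<Sum>n. gw (IS et r) (AS et r) upS (dnS r) q (1, 1) n) + (1 - q) * (\<Sum>n. gw (IS et r) (AS et r) upS (dnS r) q (0 - int r, 0) n)"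
      using et pa p00 by (subst eq) (simp add: IS_def AS_def upS_def dnS_def)
    also have "(\<Sum>n. gw (IS et r) (AS et r) upS (dnS r) q (0 - int r, 0) n) = q * (\<Sum>n. gw (IS et r) (AS et r) upS (dnS r) q (1 - int r, 1) n)"
      using et pa W2 by (subst eq) (simp add: IS_def AS_def upS_def dnS_def)
    finally show ?case unfolding Y W_def et_def q_def by (simp add: algebra_simps)
  qed
  have limW: "((\<lambda>e. W e (j, 1)) \<longlongrightarrow> v j) F" for j
  proof -
    have "((\<lambda>e. W e (j, 1)) \<longlongrightarrow> (\<Sum>n. gw (\<lambda>(j, k). I0 j) (\<lambda>(j, k). A0 j) upS (dnS r) q0 (j, 1) n)) F"
      unfolding W_def
    proof (rule gw_suminf_tendsto[OF _ evb qm(1,2) F])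
      fix n
      show "((\<lambda>e. gw (IS (eta_par p e) r) (AS (eta_par p e) r) upS (dnS r) (p_f V p e) (j, 1) n) \<longlongrightarrow>
          gw (\<lambda>(j, k). I0 j) (\<lambda>(j, k). A0 j) upS (dnS r) q0 (j, 1) n) F"
        by (rule gw_tendsto[where P="\<lambda>(j, k). 1 \<le> k", OF qlim])
           (auto simp: upS_def dnS_def intro!: H4 split: prod.splits)
    qed
    then show ?thesis unfolding v_def gwS_fst .
  qed
  have "((\<lambda>e. p_f V p e * W e (1, 1) + (1 - p_f V p e) * p_f V p e * W e (1 - int r, 1)) \<longlongrightarrow>
      q0 * v 1 + (1 - q0) * q0 * v (1 - int r)) F"
    by (intro tendsto_intros qlim limW)
  then show ?thesis using dec by (subst tendsto_cong) auto
qed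

lemma tneg:
  fixes j m :: int and t :: real
  assumes "-1 < t" "t < 0"
  shows "(of_int m \<le> of_int j + t) = (m < j)" "(of_int j + t \<le> of_int m) = (j \<le> m)"
    "(of_int m < of_int j + t) = (m < j)"
proof -
  have a: "m < j \<longleftrightarrow> of_int m + 1 \<le> (of_int j :: real)"
    by (metis of_int_1 of_int_add of_int_le_iff zless_imp_add1_zle add1_zle_eq)
  have b: "j \<le> m \<longleftrightarrow> (of_int j :: real) \<le> of_int m" by simp
  show "(of_int m \<le> of_int j + t) = (m < j)" using a assms by (smt (verit) b of_int_le_iff)
  show "(of_int j + t \<le> of_int m) = (j \<le> m)" using a assms b by (smt (verit))
  show "(of_int m < of_int j + t) = (m < j)" using a assms b by (smt (verit))
qed

lemma tpos:
  fixes j m :: int and t :: real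
  assumes "0 < t" "t < 1"
  shows "(of_int m \<le> of_int j + t) = (m \<le> j)" "(of_int j + t \<le> of_int m) = (j < m)"
    "(of_int m < of_int j + t) = (m \<le> j)"
proof -
  have a: "j < m \<longleftrightarrow> of_int j + 1 \<le> (of_int m :: real)"
    by (metis of_int_1 of_int_add of_int_le_iff zless_imp_add1_zle add1_zle_eq)
  have a2: "m < j + 1 \<longleftrightarrow> m \<le> j" by auto
  have a3: "m < j + 1 \<longleftrightarrow> (of_int m :: real) < of_int j + 1"
    by (metis of_int_1 of_int_add of_int_less_iff)
  have b: "m \<le> j \<longleftrightarrow> (of_int m :: real) \<le> of_int j" by simp
  show "(of_int m \<le> of_int j + t) = (m \<le> j)" using a2 a3 assms b by (smt (verit))
  show "(of_int j + t \<le> of_int m) = (j < m)" using a assms b by (smt (verit))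
  show "(of_int m < of_int j + t) = (m \<le> j)" using a2 a3 assms b by (smt (verit))
qed

lemma posn_t: "r > 0 \<Longrightarrow> posn et r j k = (of_int j + real r * real k * (et - 1 / real r)) / real r"
  by (simp add: posn_def field_simps)

lemma IS_AS_t:
  fixes et :: real and k :: nat and j :: int
  assumes r: "r > 0"
  defines "t \<equiv> real r * real k * (et - 1 / real r)"
  shows "IS et r (j, k) = (of_int (- int r) \<le> of_int j + t \<and> of_int j + t \<le> of_int (int r))"
    "AS et r (j, k) = (of_int (int r) < of_int j + t)"
proof -
  have te: "t = real k * (et * real r - 1)" unfolding t_def using r by (simp add: field_simps)
  show "IS et r (j, k) = (of_int (- int r) \<le> of_int j + t \<and> of_int j + t \<le> of_int (int r))"
    "AS et r (j, k) = (of_int (int r) < of_int j + t)"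
    using r by (simp_all add: IS_def AS_def posn_t te divide_simps)
qed

lemma D_pos:
  fixes q :: real assumes "0 < q" "q < 1"
  shows "real r * (1 - q) * q ^ r < 1"
proof -
  have "(\<Sum>i<r. q ^ r) \<le> (\<Sum>i<r. q ^ i)"
    by (intro sum_mono power_decreasing) (use assms in auto)
  then have "real r * q ^ r \<le> (\<Sum>i<r. q ^ i)" by simp
  then have "(1 - q) * (real r * q ^ r) \<le> (1 - q) * (\<Sum>i<r. q ^ i)"
    using assms by (intro mult_left_mono) auto
  also have "\<dots> = 1 - q ^ r" by (simp add: one_diff_power_eq)
  finally show ?thesis using assms by (simp add: algebra_simps) (smt (verit) zero_less_power)
qed

lemma chain_eqs:
  fixes II AA :: "int \<Rightarrow> bool" and qq :: real
  assumes qq: "0 < qq" "qq < 1" and H5: "\<And>j. II j \<Longrightarrow> \<not> II (j - int r - int r - int r)"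
  defines "v \<equiv> \<lambda>j. \<Sum>n. gw II AA (\<lambda>j. j + 1) (\<lambda>j. j - int r) qq j n"
  shows "v j = (if II j then qq * (if AA (j + 1) then 1 else 0) + (1 - qq) * (if AA (j - int r) then 1 else 0)
          + qq * v (j + 1) + (1 - qq) * v (j - int r) else 0)"
proof -
  have sm: "summable (gw II AA (\<lambda>j. j + 1) (\<lambda>j. j - int r) qq s)" for s
    by (rule gw_summable[where qm=qq]) (use qq H5 in auto)
  show ?thesis unfolding v_def by (rule gw_suminf_eq[OF sm])
qed

theorem mainTheorem5:
  fixes p :: real and V :: item_value and r :: nat
  assumes "1/2 < p" and "p < 1" and "2 \<le> r"
  defines "q \<equiv> p_f V p (eps_thr p r)"
  defines "Lplus \<equiv> q ^ (r + 1) * (1 + (1 - q) * q ^ r) / (1 - real r * (1 - q) * q ^ r)"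
  defines "Lminus \<equiv> q ^ r / (1 - real r * (1 - q) * q ^ r)"
  shows "(P_Ycas p V \<longlongrightarrow> Lplus) (at_right (eps_thr p r))
         \<and> (P_Ycas p V \<longlongrightarrow> Lminus) (at_left (eps_thr p r))
         \<and> Lplus < Lminus
         \<and> (Lminus - Lplus) / Lminus = (1 - q) * (1 - q ^ (r + 1))"
proof -
  have p: "1/2 < p" "p < 1" and r: "2 \<le> r" using assms by auto
  have r0: "r > 0" using r by simp
  define e0 where "e0 = eps_thr p r"
  have e0: "0 < e0" "e0 < 1" using eps_thr_facts[OF p r] by (auto simp: e0_def)
  have q0: "0 < q" "q < 1" using qf_range[OF p e0] by (auto simp: q_def e0_def)
  have eta0: "eta_par p e0 = 1 / real r" using eta_e0[OF p r] by (simp add: e0_def)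
  have r1: "0 < 1 / real r" "1 / real r < 1" using r by auto
  define D where "D = 1 - real r * (1 - q) * q ^ r"
  have D: "0 < D" using D_pos[OF q0, of r] by (simp add: D_def)
  have etac: "isCont (eta_par p) e0" using eta_cont[OF p, of e0] e0(1) by linarith
  have etalim: "(eta_par p \<longlongrightarrow> 1 / real r) (at e0 within S)" for S
  proof -
    have "continuous (at e0 within S) (eta_par p)"
      by (rule continuous_at_imp_continuous_at_within[OF etac])
    then have "(eta_par p \<longlongrightarrow> eta_par p e0) (at e0 within S)" unfolding continuous_within .
    then show ?thesis unfolding eta0 .
  qed
  have qlim: "(p_f V p \<longlongrightarrow> q) (at e0 within S)" for S
  proof -
    have "continuous (at e0 within S) (p_f V p)"
      by (rule continuous_at_imp_continuous_at_within[OF qf_cont])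
    then have "(p_f V p \<longlongrightarrow> p_f V p e0) (at e0 within S)" unfolding continuous_within .
    then show ?thesis unfolding q_def e0_def .
  qed
  have tlim: "((\<lambda>e. real r * real k * (eta_par p e - 1 / real r)) \<longlongrightarrow> 0) (at e0 within S)" for S k
  proof -
    have "((\<lambda>e. real r * real k * (eta_par p e - 1 / real r)) \<longlongrightarrow> real r * real k * (1 / real r - 1 / real r)) (at e0 within S)"
      by (rule tendsto_mult[OF tendsto_const tendsto_diff[OF etalim tendsto_const]])
    then show ?thesis by simp
  qed
  have evE: "eventually (\<lambda>e. 0 < eta_par p e \<and> eta_par p e < 1) (at e0 within S)" for S
  proof -
    have "eventually (\<lambda>e. 0 < eta_par p e) (at e0 within S)" by (rule order_tendstoD(1)[OF etalim r1(1)])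
    moreover have "eventually (\<lambda>e. eta_par p e < 1) (at e0 within S)" by (rule order_tendstoD(2)[OF etalim r1(2)])
    ultimately show ?thesis by eventually_elim auto
  qed
  define I0 where "I0 = (\<lambda>j::int. - int r < j \<and> j \<le> int r)"
  define A0 where "A0 = (\<lambda>j::int. int r < j)"
  define v where "v = (\<lambda>j. \<Sum>n. gw I0 A0 (\<lambda>j. j + 1) (\<lambda>j. j - int r) q j n)"
  have H5: "\<And>j. I0 j \<Longrightarrow> \<not> I0 (j - int r - int r - int r)" by (auto simp: I0_def)
  have evR: "eventually (\<lambda>e. e0 < e \<and> e < 1) (at_right e0)" using eventually_at_right_real[OF e0(2)] by simp
  have etaR: "eventually (\<lambda>e. eta_par p e < 1 / real r) (at_right e0)"
    using evR by eventually_elim (use eta_mono[OF p, of e0] e0 eta0 in auto)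
  have limR: "(P_Ycas p V \<longlongrightarrow> q * v 1 + (1 - q) * q * v (1 - int r)) (at_right e0)"
    unfolding v_def
  proof (rule side[OF p r])
    show "at_right e0 \<noteq> bot" by simp
    show "eventually (\<lambda>e. 0 < e \<and> e < 1 \<and> 0 < eta_par p e \<and> eta_par p e < 1) (at_right e0)"
      using evR evE by eventually_elim (use e0 in auto)
    show "(p_f V p \<longlongrightarrow> q) (at_right e0)" by (rule qlim)
    show "0 < q" "q < 1" by (rule q0)+
    show "\<And>j. I0 j \<Longrightarrow> \<not> I0 (j - int r - int r - int r)" by (rule H5)
  next
    fix j :: int and k :: nat assume k: "1 \<le> k"
    have "eventually (\<lambda>e. -1 < real r * real k * (eta_par p e - 1 / real r)) (at_right e0)"
      using tlim by (rule order_tendstoD) simp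
    then show "eventually (\<lambda>e. (IS (eta_par p e) r (j, k) \<longleftrightarrow> I0 j) \<and> (AS (eta_par p e) r (j, k) \<longleftrightarrow> A0 j)) (at_right e0)"
      using etaR
    proof eventually_elim
      case (elim e)
      define t where "t = real r * real k * (eta_par p e - 1 / real r)"
      have t: "-1 < t" "t < 0" using elim k r0 by (auto simp: t_def mult_pos_neg)
      show ?case unfolding IS_AS_t[OF r0] t_def[symmetric] tneg[OF t] by (auto simp: I0_def A0_def)
    qed
  qed
  have ceR: "v j = (if I0 j then q * (if A0 (j + 1) then 1 else 0) + (1 - q) * (if A0 (j - int r) then 1 else 0)
          + q * v (j + 1) + (1 - q) * v (j - int r) else 0)" for j
    unfolding v_def by (rule chain_eqs[where II=I0 and r=r and qq=q and AA=A0, OF q0 H5])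
  have lowR: "v j = q * v (j + 1)" if j: "- int r < j" "j \<le> 0" for j
    using ceR[of j] ceR[of "j - int r"] j by (simp add: I0_def A0_def)
  have midR: "v j = q * v (j + 1) + (1 - q) * v (j - int r)" if j: "1 \<le> j" "j < int r" for j
    using ceR[of j] j by (simp add: I0_def A0_def)
  have topR: "v (int r) = q + (1 - q) * v 0" using ceR[of "int r"] ceR[of "int r + 1"] r0 by (simp add: I0_def A0_def)
  have r1': "1 \<le> r" using r by simp
  note cR = chainR[OF r1' lowR midR topR]
  have v1: "v 1 = q ^ r / D"
  proof -
    have "v 1 * D = q ^ r" using cR(1) by (simp add: D_def algebra_simps)
    then show ?thesis using D by (simp add: field_simps)
  qed
  have LR: "q * v 1 + (1 - q) * q * v (1 - int r) = Lplus"
  proof -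
    have "q * v 1 + (1 - q) * q * v (1 - int r) = q * (q ^ r / D) + (1 - q) * q * (q ^ r * (q ^ r / D))"
      using cR(2) v1 by simp
    also have "\<dots> = Lplus" unfolding Lplus_def D_def[symmetric] using D by (simp add: field_simps power_add)
    finally show ?thesis .
  qed
  define I1 where "I1 = (\<lambda>j::int. - int r \<le> j \<and> j < int r)"
  define A1 where "A1 = (\<lambda>j::int. int r \<le> j)"
  define w where "w = (\<lambda>j. \<Sum>n. gw I1 A1 (\<lambda>j. j + 1) (\<lambda>j. j - int r) q j n)"
  have H5L: "\<And>j. I1 j \<Longrightarrow> \<not> I1 (j - int r - int r - int r)" by (auto simp: I1_def)
  have evL: "eventually (\<lambda>e. 0 < e \<and> e < e0) (at_left e0)" using eventually_at_left_real[OF e0(1)] by simp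
  have etaL: "eventually (\<lambda>e. 1 / real r < eta_par p e) (at_left e0)"
    using evL
  proof eventually_elim
    case (elim e)
    have "eta_par p e0 < eta_par p e" using eta_mono[OF p, of e e0] elim by auto
    then show ?case using eta0 by simp
  qed
  have limL: "(P_Ycas p V \<longlongrightarrow> q * w 1 + (1 - q) * q * w (1 - int r)) (at_left e0)"
    unfolding w_def
  proof (rule side[OF p r])
    show "at_left e0 \<noteq> bot" by simp
    show "eventually (\<lambda>e. 0 < e \<and> e < 1 \<and> 0 < eta_par p e \<and> eta_par p e < 1) (at_left e0)"
      using evL evE by eventually_elim (use e0 in auto)
    show "(p_f V p \<longlongrightarrow> q) (at_left e0)" by (rule qlim)
    show "0 < q" "q < 1" by (rule q0)+
    show "\<And>j. I1 j \<Longrightarrow> \<not> I1 (j - int r - int r - int r)" by (rule H5L)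
  next
    fix j :: int and k :: nat assume k: "1 \<le> k"
    have "eventually (\<lambda>e. real r * real k * (eta_par p e - 1 / real r) < 1) (at_left e0)"
      using tlim by (rule order_tendstoD) simp
    then show "eventually (\<lambda>e. (IS (eta_par p e) r (j, k) \<longleftrightarrow> I1 j) \<and> (AS (eta_par p e) r (j, k) \<longleftrightarrow> A1 j)) (at_left e0)"
      using etaL
    proof eventually_elim
      case (elim e)
      define t where "t = real r * real k * (eta_par p e - 1 / real r)"
      have t: "0 < t" "t < 1" using elim k r0 by (auto simp: t_def)
      show ?case unfolding IS_AS_t[OF r0] t_def[symmetric] tpos[OF t] by (auto simp: I1_def A1_def)
    qed
  qed
  have ceL: "w j = (if I1 j then q * (if A1 (j + 1) then 1 else 0) + (1 - q) * (if A1 (j - int r) then 1 else 0)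
          + q * w (j + 1) + (1 - q) * w (j - int r) else 0)" for j
    unfolding w_def by (rule chain_eqs[where II=I1 and r=r and qq=q and AA=A1, OF q0 H5L])
  have lowL: "w j = q * w (j + 1)" if j: "- int r \<le> j" "j \<le> -1" for j
    using ceL[of j] ceL[of "j - int r"] j by (simp add: I1_def A1_def)
  have midL: "w j = q * w (j + 1) + (1 - q) * w (j - int r)" if j: "0 \<le> j" "j < int r - 1" for j
    using ceL[of j] j by (simp add: I1_def A1_def)
  have topL: "w (int r - 1) = q + (1 - q) * w (-1)" using ceL[of "int r - 1"] ceL[of "int r"] r0 by (simp add: I1_def A1_def)
  note cL = chainL[OF r lowL midL topL]
  have w0: "w 0 = q ^ r / D"
  proof -
    have "w 0 * D = q ^ r" using cL(1) by (simp add: D_def algebra_simps)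
    then show ?thesis using D by (simp add: field_simps)
  qed
  have LL: "q * w 1 + (1 - q) * q * w (1 - int r) = Lminus"
    using cL(2) w0 unfolding Lminus_def D_def[symmetric] by (simp add: algebra_simps)
  have qr1: "q ^ r \<le> 1" using q0 by (intro power_le_one) auto
  have m: "q * q ^ r \<le> q * 1" using qr1 q0 by (intro mult_left_mono) auto
  have pq: "q ^ (r + 1) = q * q ^ r" by simp
  have qr: "0 < q ^ r" "q ^ (r + 1) < 1" using q0 apply simp using m pq q0 by linarith
  have diff: "Lminus - Lplus = q ^ r * ((1 - q) * (1 - q ^ (r + 1))) / D"
    unfolding Lminus_def Lplus_def D_def[symmetric] using D by (simp add: field_simps power_add)
  have "0 < q ^ r * ((1 - q) * (1 - q ^ (r + 1))) / D" using qr q0 D by simp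
  then have lt: "Lplus < Lminus" using diff by simp
  have ratio: "(Lminus - Lplus) / Lminus = (1 - q) * (1 - q ^ (r + 1))"
  proof -
    have Lm: "Lminus = q ^ r / D" unfolding Lminus_def D_def ..
    have "(Lminus - Lplus) / Lminus = (q ^ r * ((1 - q) * (1 - q ^ (r + 1))) / D) / (q ^ r / D)"
      by (subst diff) (simp only: Lm)
    also have "\<dots> = (1 - q) * (1 - q ^ (r + 1))"
    proof -
      have g: "(a * X / d) / (a / d) = X" if "a \<noteq> 0" "d \<noteq> 0" for a X d :: real
        using that by (simp add: field_simps)
      have "q ^ r \<noteq> 0" using qr(1) by (metis less_irrefl)
      moreover have "D \<noteq> 0" using D by (metis less_irrefl)
      ultimately show ?thesis by (rule g)
    qed
    finally show ?thesis .
  qed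
  show ?thesis using limR LR limL LL lt ratio by (simp add: e0_def)
qed

end
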